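(* Let $F\in\mathbb{R}[x,y,t,s]$ be square-free, with no factor depending only on $(t,s)$, and such that the leading coefficient of $F$ with respect to $y$ does not depend on $x$. Let $M=\sqrt{D_y(F)}$ and let $R(t,s)$ be the square-free part of $D_x(M)$; assume $R$ is not identically zero and not a polynomial in only one of $t,s$. Write $R(t,s)=\alpha_p(t)s^p+\alpha_{p-1}(t)s^{p-1}+\cdots+\alpha_0(t)$ with $\alpha_p\neq0$. Let $\mathcal{B}$ be the set of real zeros of $D_s(R)$, let $\tilde G(x,y,t)=\sqrt{\mathrm{Res}_s(F,R)}$, let $G$ be obtained from $\tilde G$ by removing its factors depending only on $t$ (assume its leading coefficient with respect to $y$ does not depend on $x$), let $\mathcal{C}$ be a critical set of the one-parameter family $G(x,y,t)=0$, $\mathcal{A}=\mathcal{B}\cup\mathcal{C}$, and let $I\subset\mathbb{R}$ be an open interval with $I\cap\mathcal{A}=\emptyset$. Then there exist $p$ different analytic (possibly complex-valued) functions $\psi_1(t),\dots,\psi_p(t)$, defined on an open complex set containing $I$, such that the zero set of $R(t,s)$ over $I$ (i.e. the set of $(t,s)$ with $t\in I$, $s\in\mathbb{C}$, $R(t,s)=0$) is the union of the zero sets of $s=\psi_k(t)$, $k=1,\dots,p$.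
   Context: For a polynomial $G$ and a variable $w$, $D_w(G):=\mathrm{Res}_w(G,\partial G/\partial w)$, and $\sqrt{G}$ denotes the square-free part of $G$. A finite set $\mathcal{C}\subset\mathbb{R}$ is a critical set of the one-parameter family $G(x,y,t)=0$ if whenever $[t',t'']\cap\mathcal{C}=\emptyset$, the curves $G(x,y,t')=0$ and $G(x,y,t'')=0$ have the same topology type, i.e. there is a homeomorphism of $\mathbb{R}^2$ mapping one real zero set onto the other. *)

theory Defs
  imports "HOL-Analysis.Analysis"
    "HOL-Computational_Algebra.Polynomial_Factorial"
    "HOL-Computational_Algebra.Squarefree"
    "HOL-Computational_Algebra.Field_as_Ring"
    "Subresultants.Resultant_Prelim"
begin

text \<open>Multivariate polynomials are represented as nested univariate polynomials.
  For a nested polynomial the OUTERMOST variable is listed first.  The functions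
  below evaluate such nested polynomials; their arguments are given from the
  outermost variable to the innermost one.\<close>

definition ev2 :: "'a::comm_semiring_0 poly poly \<Rightarrow> 'a \<Rightarrow> 'a \<Rightarrow> 'a" where
  "ev2 P a b = poly (poly P [:a:]) b"

definition ev3 :: "'a::comm_semiring_0 poly poly poly \<Rightarrow> 'a \<Rightarrow> 'a \<Rightarrow> 'a \<Rightarrow> 'a" where
  "ev3 P a b c = poly (poly (poly P [:[:a:]:]) [:b:]) c"

definition ev4 :: "'a::comm_semiring_0 poly poly poly poly \<Rightarrow> 'a \<Rightarrow> 'a \<Rightarrow> 'a \<Rightarrow> 'a \<Rightarrow> 'a" where
  "ev4 P a b c d = poly (poly (poly (poly P [:[:[:a:]:]:]) [:[:b:]:]) [:c:]) d"

text \<open>Discriminant in the sense of the paper: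
  D_w(G) = Res_w(G, dG/dw), where w is the outermost variable of G.\<close>

definition disc :: "'a::{comm_ring_1,semiring_no_zero_divisors} poly \<Rightarrow> 'a" where
  "disc G = resultant G (pderiv G)"

text \<open>H is a square-free part (radical) of P: the product of the distinct
  irreducible factors of P, determined up to a unit.  By convention the
  square-free part of 0 is 0.\<close>

definition is_sqfree_part :: "'a::factorial_semiring \<Rightarrow> 'a \<Rightarrow> bool" where
  "is_sqfree_part H P \<longleftrightarrow>
     (if P = 0 then H = 0 else squarefree H \<and> H dvd P \<and> (\<exists>k. P dvd H ^ k))"

definition same_topology_type :: "(real \<times> real) set \<Rightarrow> (real \<times> real) set \<Rightarrow> bool" where
  "same_topology_type Z1 Z2 \<longleftrightarrow>
     (\<exists>f g. homeomorphism (UNIV :: (real \<times> real) set) UNIV f g \<and> f ` Z1 = Z2)"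

definition critical_set :: "real poly poly poly \<Rightarrow> real set \<Rightarrow> bool" where
  "critical_set G C \<longleftrightarrow> finite C \<and>
     (\<forall>t1 t2. {min t1 t2 .. max t1 t2} \<inter> C = {} \<longrightarrow>
        same_topology_type {(x, y). ev3 G y x t1 = 0} {(x, y). ev3 G y x t2 = 0})"

end

theory Submission
  imports Defs "HOL-Complex_Analysis.Complex_Analysis" "Subresultants.Subresultant_Gcd"
    "HOL-Computational_Algebra.Fundamental_Theorem_Algebra"
begin


lemma dist_pair_le: "dist (a::'a::metric_space,b::'b::metric_space) (c,d) \<le> dist a c + dist b d"
proof -
  have "sqrt ((dist a c)\<^sup>2 + (dist b d)\<^sup>2) \<le> sqrt ((dist a c + dist b d)\<^sup>2)"
    by (intro real_sqrt_le_mono) (simp add: power2_sum)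
  then show ?thesis by (simp add: dist_Pair_Pair)
qed

lemma IL:
  fixes f fd :: "complex \<Rightarrow> complex \<Rightarrow> complex"
  assumes contf: "\<And>s. continuous_on UNIV (\<lambda>t. f t s)"
    and contfd: "continuous_on UNIV (\<lambda>x. fd (fst x) (snd x))"
    and der: "\<And>t s. (f t has_field_derivative fd t s) (at s)"
    and hol: "\<And>h A. h holomorphic_on A \<Longrightarrow> (\<lambda>t. f t (h t)) holomorphic_on A"
    and root: "f t0 s0 = 0" and nz: "fd t0 s0 \<noteq> 0"
  obtains e0 where "e0 > 0" "\<And>e. 0 < e \<Longrightarrow> e \<le> e0 \<Longrightarrow> \<exists>\<delta>>0. \<exists>r. r holomorphic_on ball t0 \<delta> \<and>
      (\<forall>t\<in>ball t0 \<delta>. r t \<in> ball s0 e \<and> f t (r t) = 0 \<and> (\<forall>s\<in>ball s0 e. f t s = 0 \<longrightarrow> s = r t))"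
proof -
  define c where "c = fd t0 s0"
  have cnz: "c \<noteq> 0" using nz c_def by simp
  have "continuous (at (t0,s0)) (\<lambda>x. fd (fst x) (snd x))"
    using contfd by (simp add: continuous_on_eq_continuous_at)
  then obtain \<rho> where rho: "\<rho> > 0" "\<And>x. dist x (t0,s0) < \<rho> \<Longrightarrow> dist (fd (fst x) (snd x)) c < norm c / 2"
    unfolding continuous_at_eps_delta c_def using cnz c_def by (metis fst_conv snd_conv zero_less_norm_iff half_gt_zero)
  have key: "norm (1 - fd t s / c) \<le> 1/2" if "dist t t0 < \<rho>/2" "dist s s0 \<le> \<rho>/2" for t s
  proof -
    have "dist (t,s) (t0,s0) < \<rho>" using dist_pair_le[of t s t0 s0] that by linarith
    then have "dist (fd t s) c < norm c / 2" using rho(2)[of "(t,s)"] by simp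
    then have "norm (c - fd t s) / norm c < 1/2" using cnz by (simp add: dist_norm norm_minus_commute divide_simps)
    moreover have "1 - fd t s / c = (c - fd t s) / c" using cnz by (simp add: field_simps)
    ultimately show ?thesis by (simp add: norm_divide)
  qed
  show ?thesis
  proof (rule that[of "\<rho>/2"])
    show "\<rho>/2 > 0" using rho by simp
    fix e :: real assume e: "0 < e" "e \<le> \<rho>/2"
    have "continuous (at t0) (\<lambda>t. f t s0)" using contf[of s0] by (simp add: continuous_on_eq_continuous_at)
    then obtain \<delta>2 where d2: "\<delta>2 > 0" "\<And>t. dist t t0 < \<delta>2 \<Longrightarrow> dist (f t s0) (f t0 s0) < norm c * e / 4"
      unfolding continuous_at_eps_delta using cnz e by (metis divide_pos_pos mult_pos_pos zero_less_norm_iff zero_less_numeral)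
    define \<delta> where "\<delta> = min (\<rho>/2) \<delta>2"
    have dpos: "\<delta> > 0" using rho d2 by (simp add: \<delta>_def)
    define T where "T t s = s - f t s / c" for t s
    have lip: "norm (T t x - T t y) \<le> 1/2 * norm (x - y)"
      if t: "t \<in> ball t0 \<delta>" and xy: "x \<in> cball s0 e" "y \<in> cball s0 e" for t x y
    proof (rule field_differentiable_bound[where S="cball s0 e" and f="T t" and f'="\<lambda>z. 1 - fd t z / c"])
      show "convex (cball s0 e)" by simp
      fix z assume z: "z \<in> cball s0 e"
      show "(T t has_field_derivative 1 - fd t z / c) (at z within cball s0 e)"
        unfolding T_def by (rule has_field_derivative_at_within) (use cnz in \<open>auto intro!: derivative_eq_intros der\<close>)
      show "norm (1 - fd t z / c) \<le> 1/2"
        using t z e by (intro key) (auto simp: \<delta>_def dist_commute)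
    qed (use xy in auto)
    have T0: "norm (T t s0 - s0) < e/4" if "t \<in> ball t0 \<delta>" for t
    proof -
      have "norm (f t s0) < norm c * e / 4" using d2(2)[of t] that root by (simp add: \<delta>_def dist_commute)
      then show ?thesis using cnz by (simp add: T_def norm_divide divide_simps mult.commute)
    qed
    have maps: "T t x \<in> cball s0 (e/2)" if t: "t \<in> ball t0 \<delta>" and x: "x \<in> cball s0 (e/2)" for t x
    proof -
      have "norm (T t x - T t s0) \<le> 1/2 * norm (x - s0)" using lip[OF t, of x s0] x e by (auto simp: dist_norm norm_minus_commute)
      also have "\<dots> \<le> e/4" using x by (simp add: dist_norm norm_minus_commute)
      finally have "norm (T t x - T t s0) \<le> e/4" .
      then have "norm (T t x - s0) < e/2" using T0[OF t] norm_triangle_lt[of "T t x - T t s0" "T t s0 - s0" "e/2"] by simp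
      then show ?thesis by (simp add: dist_norm norm_minus_commute)
    qed
    have fix_ex: "\<exists>!x\<in>cball s0 (e/2). T t x = x" if t: "t \<in> ball t0 \<delta>" for t
    proof (rule Banach_fix[where c="1/2"])
      show "complete (cball s0 (e/2))" by (simp add: complete_eq_closed)
      show "cball s0 (e/2) \<noteq> {}" using e by simp
      show "T t ` cball s0 (e / 2) \<subseteq> cball s0 (e / 2)" using maps[OF t] by auto
      fix x y assume "x \<in> cball s0 (e/2)" "y \<in> cball s0 (e/2)"
      then show "dist (T t x) (T t y) \<le> 1/2 * dist x y" using lip[OF t, of x y] e by (simp add: dist_norm)
    qed auto
    define r where "r t = (THE x. x \<in> cball s0 (e/2) \<and> T t x = x)" for t
    have r: "r t \<in> cball s0 (e/2) \<and> T t (r t) = r t" if "t \<in> ball t0 \<delta>" for t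
      unfolding r_def using theI'[OF fix_ex[OF that]] by blast
    have fixeq: "T t s = s \<longleftrightarrow> f t s = 0" for t s using cnz by (simp add: T_def)
    define X where "X n t = (T t ^^ n) s0" for n t
    have Xin: "X n t \<in> cball s0 (e/2)" if "t \<in> ball t0 \<delta>" for n t
      by (induction n) (use e maps[OF that] in \<open>auto simp: X_def\<close>)
    have Xconv: "norm (X n t - r t) \<le> (1/2)^n * e" if t: "t \<in> ball t0 \<delta>" for n t
    proof (induction n)
      case 0 then show ?case using r[OF t] e by (simp add: X_def dist_norm norm_minus_commute)
    next
      case (Suc n)
      have "norm (X (Suc n) t - r t) = norm (T t (X n t) - T t (r t))" using r[OF t] by (simp add: X_def)
      also have "\<dots> \<le> 1/2 * norm (X n t - r t)" using lip[OF t, of "X n t" "r t"] Xin[OF t, of n] r[OF t] e by auto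
      also have "\<dots> \<le> (1/2)^Suc n * e" using Suc by simp
      finally show ?case .
    qed
    have Xhol: "X n holomorphic_on ball t0 \<delta>" for n
    proof (induction n)
      case 0 then show ?case by (simp add: X_def)
    next
      case (Suc n)
      have eq: "X (Suc n) = (\<lambda>t. X n t - f t (X n t) / c)" by (simp add: X_def T_def fun_eq_iff)
      show ?case unfolding eq using cnz by (intro holomorphic_intros hol Suc) auto
    qed
    have ulim: "uniform_limit (ball t0 \<delta>) X r sequentially"
    proof (rule uniform_limitI)
      fix \<epsilon> :: real assume "\<epsilon> > 0"
      obtain N where N: "(1/2::real)^N < \<epsilon> / e" using real_arch_pow_inv[of "\<epsilon>/e" "1/2"] \<open>\<epsilon>>0\<close> e by auto
      show "\<forall>\<^sub>F n in sequentially. \<forall>t\<in>ball t0 \<delta>. dist (X n t) (r t) < \<epsilon>"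
      proof (rule eventually_sequentiallyI[of N], intro ballI)
        fix n t assume n: "N \<le> n" and t: "t \<in> ball t0 \<delta>"
        have "(1/2::real)^n \<le> (1/2)^N" using n by (simp add: power_decreasing)
        then have "(1/2::real)^n * e \<le> (1/2)^N * e" using e by (intro mult_right_mono) auto
        also have "(1/2::real)^N * e < \<epsilon>" using N e by (simp add: field_simps)
        finally have "(1/2::real)^n * e < \<epsilon>" .
        then show "dist (X n t) (r t) < \<epsilon>" using Xconv[OF t, of n] by (simp add: dist_norm)
      qed
    qed
    have rhol: "r holomorphic_on ball t0 \<delta>"
    proof (rule holomorphic_uniform_sequence[OF _ Xhol])
      fix x assume x: "x \<in> ball t0 \<delta>"
      define d where "d = (\<delta> - dist t0 x)/2"
      have "d > 0" "cball x d \<subseteq> ball t0 \<delta>" using x apply (auto simp: d_def dist_commute)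
        by (smt (verit) dist_commute dist_triangle)
      then show "\<exists>d>0. cball x d \<subseteq> ball t0 \<delta> \<and> uniform_limit (cball x d) X r sequentially"
        using uniform_limit_on_subset[OF ulim] by blast
    qed simp
    show "\<exists>\<delta>>0. \<exists>r. r holomorphic_on ball t0 \<delta> \<and>
      (\<forall>t\<in>ball t0 \<delta>. r t \<in> ball s0 e \<and> f t (r t) = 0 \<and> (\<forall>s\<in>ball s0 e. f t s = 0 \<longrightarrow> s = r t))"
    proof (intro exI conjI ballI impI)
      show "\<delta> > 0" by (rule dpos)
      show "r holomorphic_on ball t0 \<delta>" by (rule rhol)
      fix t assume t: "t \<in> ball t0 \<delta>"
      show "r t \<in> ball s0 e" using r[OF t] e by auto
      show "f t (r t) = 0" using r[OF t] fixeq by blast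
      fix s assume s: "s \<in> ball s0 e" "f t s = 0"
      have "norm (T t s - T t (r t)) \<le> 1/2 * norm (s - r t)" using lip[OF t, of s "r t"] s r[OF t] e by auto
      then have "norm (s - r t) \<le> 1/2 * norm (s - r t)" using s(2) r[OF t] fixeq by metis
      then show "s = r t" by simp
    qed
  qed
qed



definition hz :: "complex \<Rightarrow> real poly \<Rightarrow> complex" where
  "hz z c = poly (map_poly of_real c) z"

lemma hz_hom: "idom_hom (hz z)"
proof -
  interpret rp: map_poly_inj_idom_hom "of_real :: real \<Rightarrow> complex" ..
  show ?thesis by unfold_locales (auto simp: hz_def rp.hom_mult rp.hom_add)
qed

lemma hz_lead_nz:
  fixes R :: "real poly poly"
  assumes m: "degree R > 0" and nz: "hz z (resultant R (pderiv R)) \<noteq> 0"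
  shows "hz z (lead_coeff R) \<noteq> 0"
proof
  assume lz: "hz z (lead_coeff R) = 0"
  interpret h: idom_hom "hz z" by (rule hz_hom)
  define m where "m = degree R"
  define n where "n = degree (pderiv R)"
  have m0: "0 < m" using m by (simp add: m_def)
  have n: "n = m - 1" unfolding n_def m_def by (simp add: degree_pderiv)
  define S where "S = sylvester_mat R (pderiv R)"
  have Sc: "S \<in> carrier_mat (m+n) (m+n)" unfolding S_def m_def n_def by (rule sylvester_carrier_mat)
  have cz: "hz z (S $$ (i, 0)) = 0" if i: "i < m + n" for i
  proof -
    have "0 < m + n" using i by linarith
    have e: "S $$ (i,0) = (if i < n then if i \<le> 0 \<and> 0 - i \<le> m then coeff R (m + i - 0) else 0
       else if i - n \<le> 0 \<and> 0 \<le> i then coeff (pderiv R) (i - 0) else 0)"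
      unfolding S_def m_def n_def by (rule sylvester_index_mat) (use i m0 in \<open>auto simp: m_def n_def\<close>)
    have c1: "hz z (coeff R m) = 0" using lz by (simp add: m_def)
    have c2: "hz z (coeff (pderiv R) n) = 0"
    proof -
      have "coeff (pderiv R) n = of_nat (Suc n) * coeff R (Suc n)" by (simp add: coeff_pderiv)
      also have "Suc n = m" using n m by (simp add: m_def)
      finally show ?thesis using c1 by (simp add: h.hom_mult)
    qed
    show ?thesis using c1 c2 by (simp add: e)
  qed
  have "Determinant.det (map_mat (hz z) S) = 0"
  proof -
    have MC: "map_mat (hz z) S \<in> carrier_mat (m+n) (m+n)" using Sc by simp
    have "0 < m + n" using m by (simp add: m_def)
    show ?thesis
      unfolding det_col[OF MC]
    proof (rule sum.neutral, intro ballI)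
      fix p assume "p \<in> {p. p permutes {0..<m+n}}"
      then have p0: "p 0 < m + n" using \<open>0 < m+n\<close> by (auto dest: permutes_in_image)
      have "(\<Prod>j<m+n. map_mat (hz z) S $$ (p j, j)) = 0"
        by (rule prod_zero[OF _ bexI[of _ 0]]) (use p0 cz Sc \<open>0<m+n\<close> in auto)
      then show "of_int (sign p) * (\<Prod>j<m+n. map_mat (hz z) S $$ (p j, j)) = 0" by simp
    qed
  qed
  then have "hz z (Determinant.det S) = 0" by (simp add: h.hom_det)
  then show False using nz by (simp add: S_def resultant_def)
qed

lemma hz_good:
  fixes R :: "real poly poly"
  assumes m: "degree R > 0" and nz: "hz z (resultant R (pderiv R)) \<noteq> 0"
  shows "degree (map_poly (hz z) R) = degree R"
    and "\<And>s. poly (map_poly (hz z) R) s = 0 \<Longrightarrow> poly (pderiv (map_poly (hz z) R)) s \<noteq> 0"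
proof -
  interpret h: idom_hom "hz z" by (rule hz_hom)
  have l: "hz z (lead_coeff R) \<noteq> 0" by (rule hz_lead_nz[OF assms])
  show d1: "degree (map_poly (hz z) R) = degree R"
    by (rule degree_map_poly) (use l in auto)
  have "lead_coeff (pderiv R) = of_nat (degree R) * lead_coeff R"
    using m by (simp add: degree_pderiv coeff_pderiv)
  then have l2: "hz z (lead_coeff (pderiv R)) \<noteq> 0" using l m by (simp add: h.hom_mult h.hom_of_nat)
  have d2: "degree (map_poly (hz z) (pderiv R)) = degree (pderiv R)"
    by (rule degree_map_poly) (use l2 in auto)
  have res: "resultant (map_poly (hz z) R) (pderiv (map_poly (hz z) R)) \<noteq> 0"
    using h.resultant_map_poly[OF d1 d2] nz by (simp add: h.map_poly_pderiv)
  fix s assume s: "poly (map_poly (hz z) R) s = 0"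
  show "poly (pderiv (map_poly (hz z) R)) s \<noteq> 0"
  proof
    assume s': "poly (pderiv (map_poly (hz z) R)) s = 0"
    let ?P = "map_poly (hz z) R"
    have P0: "?P \<noteq> 0" using d1 m by auto
    have "[:-s,1:] dvd gcd ?P (pderiv ?P)" using s s' by (simp add: poly_eq_0_iff_dvd)
    moreover have "gcd ?P (pderiv ?P) \<noteq> 0" using P0 by simp
    ultimately have "degree [:-s,1:] \<le> degree (gcd ?P (pderiv ?P))"
      by (rule dvd_imp_degree_le)
    then have "degree (gcd ?P (pderiv ?P)) \<noteq> 0" by simp
    then show False using res resultant_0_gcd by blast
  qed
qed



lemma poly_map_pCons0: "f 0 = 0 \<Longrightarrow> poly (map_poly f (pCons a p)) x = f a + x * poly (map_poly f p) x"
  by (cases "a = 0 \<and> p = 0") (auto simp: map_poly_pCons)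

lemma hz0: "hz z 0 = 0" by (simp add: hz_def)

lemma ev2_hz: "ev2 (map_poly (map_poly complex_of_real) R) s t = poly (map_poly (hz t) R) s"
proof (induction R)
  case 0 then show ?case by (simp add: ev2_def)
next
  case (pCons a R)
  have "map_poly (map_poly complex_of_real) (pCons a R) = pCons (map_poly of_real a) (map_poly (map_poly of_real) R)"
    by (cases "a = 0 \<and> R = 0") (auto simp: map_poly_pCons)
  then show ?case using pCons by (simp add: ev2_def poly_map_pCons0 hz0 hz_def)
qed

lemma F_cont: "continuous_on UNIV (\<lambda>x. poly (map_poly (hz (fst x)) R) (snd x))"
proof (induction R)
  case 0 then show ?case by simp
next
  case (pCons a R)
  have eq: "(\<lambda>x. poly (map_poly (hz (fst x)) (pCons a R)) (snd x)) =
     (\<lambda>x. poly (map_poly of_real a) (fst x) + snd x * poly (map_poly (hz (fst x)) R) (snd x))"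
    by (simp add: poly_map_pCons0 hz0 hz_def[of _ a])
  show ?case unfolding eq
    by (intro continuous_intros continuous_on_poly pCons)
qed

lemma F_hol: "h holomorphic_on A \<Longrightarrow> (\<lambda>t. poly (map_poly (hz t) R) (h t)) holomorphic_on A"
proof (induction R)
  case 0 then show ?case by simp
next
  case (pCons a R)
  have eq: "(\<lambda>t. poly (map_poly (hz t) (pCons a R)) (h t)) =
     (\<lambda>t. poly (map_poly of_real a) t + h t * poly (map_poly (hz t) R) (h t))"
    by (simp add: poly_map_pCons0 hz0 hz_def[of _ a])
  show ?case unfolding eq
    by (intro holomorphic_intros pCons)
qed

lemma F_cont1: "continuous_on UNIV (\<lambda>t. poly (map_poly (hz t) R) s)"
  using F_hol[of "\<lambda>_. s" UNIV R] holomorphic_on_imp_continuous_on by auto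

lemma F_der: "((\<lambda>s. poly (map_poly (hz t) R) s) has_field_derivative poly (map_poly (hz t) (pderiv R)) s) (at s)"
proof -
  interpret h: idom_hom "hz t" by (rule hz_hom)
  show ?thesis using poly_DERIV[of "map_poly (hz t) R" s] by (simp add: h.map_poly_pderiv)
qed

lemma IL_R:
  fixes R :: "real poly poly"
  assumes root: "poly (map_poly (hz t0) R) s0 = 0" and nz: "poly (map_poly (hz t0) (pderiv R)) s0 \<noteq> 0"
  obtains e0 where "e0 > 0" "\<And>e. 0 < e \<Longrightarrow> e \<le> e0 \<Longrightarrow> \<exists>\<delta>>0. \<exists>r. r holomorphic_on ball t0 \<delta> \<and>
      (\<forall>t\<in>ball t0 \<delta>. r t \<in> ball s0 e \<and> poly (map_poly (hz t) R) (r t) = 0 \<and>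
         (\<forall>s\<in>ball s0 e. poly (map_poly (hz t) R) s = 0 \<longrightarrow> s = r t))"
  by (rule IL[where f="\<lambda>t s. poly (map_poly (hz t) R) s" and fd="\<lambda>t s. poly (map_poly (hz t) (pderiv R)) s"])
     (use F_cont1 F_cont F_der F_hol root nz in auto)

definition good :: "real poly poly \<Rightarrow> complex \<Rightarrow> bool" where
  "good R z \<longleftrightarrow> degree (map_poly (hz z) R) = degree R \<and>
     (\<forall>s. poly (map_poly (hz z) R) s = 0 \<longrightarrow> poly (map_poly (hz z) (pderiv R)) s \<noteq> 0)"

lemma good_I:
  assumes "degree R > 0" "hz z (resultant R (pderiv R)) \<noteq> 0" shows "good R z"
proof -
  interpret h: idom_hom "hz z" by (rule hz_hom)
  show ?thesis using hz_good[OF assms] by (simp add: good_def h.map_poly_pderiv)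
qed

lemma good_roots:
  assumes g: "good R z" and p: "degree R > 0"
  shows "finite {s. poly (map_poly (hz z) R) s = 0}" "card {s. poly (map_poly (hz z) R) s = 0} = degree R"
proof -
  interpret h: idom_hom "hz z" by (rule hz_hom)
  let ?P = "map_poly (hz z) R"
  have P0: "?P \<noteq> 0" using g p by (auto simp: good_def)
  show fin: "finite {s. poly ?P s = 0}" using P0 by (rule poly_roots_finite)
  have "rsquarefree ?P" unfolding rsquarefree_roots using g by (auto simp: good_def h.map_poly_pderiv)
  then have eq: "Polynomial.smult (lead_coeff ?P) (\<Prod>z|poly ?P z = 0. [:-z, 1:]) = ?P"
    by (rule complex_poly_decompose_rsquarefree)
  have lc: "lead_coeff ?P \<noteq> 0" using P0 by (metis leading_coeff_0_iff)
  have "degree ?P = degree (\<Prod>z|poly ?P z = 0. [:-z, 1:])"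
    by (metis eq degree_smult_eq lc)
  also have "\<dots> = (\<Sum>z|poly ?P z = 0. degree [:-z, 1:])"
    by (rule degree_prod_eq_sum_degree) auto
  also have "\<dots> = card {s. poly ?P s = 0}" by simp
  finally show "card {s. poly ?P s = 0} = degree R" using g by (simp add: good_def)
qed

lemma root_hol:
  fixes R :: "real poly poly"
  assumes U: "open U" and cont: "continuous_on U \<psi>"
    and root: "\<And>y. y \<in> U \<Longrightarrow> poly (map_poly (hz y) R) (\<psi> y) = 0"
    and g: "\<And>y. y \<in> U \<Longrightarrow> good R y"
  shows "\<psi> holomorphic_on U"
  unfolding holomorphic_on_def
proof
  fix y0 assume y0: "y0 \<in> U"
  have nz: "poly (map_poly (hz y0) (pderiv R)) (\<psi> y0) \<noteq> 0" using g[OF y0] root[OF y0] by (auto simp: good_def)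
  obtain e0 where e0: "e0 > 0" "\<And>e. 0 < e \<Longrightarrow> e \<le> e0 \<Longrightarrow> \<exists>\<delta>>0. \<exists>r. r holomorphic_on ball y0 \<delta> \<and>
      (\<forall>t\<in>ball y0 \<delta>. r t \<in> ball (\<psi> y0) e \<and> poly (map_poly (hz t) R) (r t) = 0 \<and>
         (\<forall>s\<in>ball (\<psi> y0) e. poly (map_poly (hz t) R) s = 0 \<longrightarrow> s = r t))"
    using IL_R[OF root[OF y0] nz] by blast
  obtain \<delta> r where d: "\<delta> > 0" "r holomorphic_on ball y0 \<delta>"
    and r: "\<And>t s. t\<in>ball y0 \<delta> \<Longrightarrow> s\<in>ball (\<psi> y0) e0 \<Longrightarrow> poly (map_poly (hz t) R) s = 0 \<Longrightarrow> s = r t"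
    using e0(2)[OF e0(1) order_refl] by blast
  obtain \<delta>' where d': "\<delta>' > 0" "\<And>y. y \<in> U \<Longrightarrow> dist y y0 < \<delta>' \<Longrightarrow> dist (\<psi> y) (\<psi> y0) < e0"
    using cont y0 e0(1) unfolding continuous_on_iff by blast
  show "\<psi> field_differentiable at y0 within U"
  proof (rule field_differentiable_transform_within[where f=r and d="min \<delta> \<delta>'"])
    show "0 < min \<delta> \<delta>'" using d d' by simp
    show "y0 \<in> U" by (rule y0)
    fix y assume y: "y \<in> U" "dist y y0 < min \<delta> \<delta>'"
    show "r y = \<psi> y"
      using r[of y "\<psi> y"] y d'(2)[of y] root[OF y(1)] by (auto simp: dist_commute)
  next
    have "r field_differentiable at y0" using d
      by (meson centre_in_ball holomorphic_on_imp_differentiable_at open_ball)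
    then show "r field_differentiable at y0 within U" by (rule field_differentiable_at_within)
  qed
qed



lemma finite_pos_min:
  fixes A :: "real set" assumes "finite A" "\<And>a. a \<in> A \<Longrightarrow> a > 0"
  obtains e where "e > 0" "\<And>a. a \<in> A \<Longrightarrow> e \<le> a"
proof -
  have "Min (insert 1 A) > 0" using assms by (subst Min_gr_iff) auto
  moreover have "\<And>a. a \<in> A \<Longrightarrow> Min (insert 1 A) \<le> a" using assms by auto
  ultimately show ?thesis using that by blast
qed

lemma cover:
  fixes R :: "real poly poly" and S :: "complex set"
  assumes p: "degree R > 0" and S: "open S" and g: "\<And>z. z \<in> S \<Longrightarrow> good R z"
  shows "covering_space {x. fst x \<in> S \<and> poly (map_poly (hz (fst x)) R) (snd x) = 0} fst S"
    (is "covering_space ?C fst S")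
proof (rule covering_spaceI)
  let ?F = "\<lambda>t s. poly (map_poly (hz t) R) s"
  show "continuous_on ?C fst" by (intro continuous_intros)
  show "fst ` ?C = S"
  proof
    show "fst ` ?C \<subseteq> S" by auto
    show "S \<subseteq> fst ` ?C"
    proof
      fix z assume z: "z \<in> S"
      have "degree (map_poly (hz z) R) > 0" using g[OF z] p by (simp add: good_def)
      then obtain s where "?F z s = 0"
        using fundamental_theorem_of_algebra constant_degree by (metis neq0_conv)
      then have "(z, s) \<in> ?C" using z by simp
      then show "z \<in> fst ` ?C" by (rule rev_image_eqI) simp
    qed
  qed
  fix z0 assume z0: "z0 \<in> S"
  let ?Z = "{s. ?F z0 s = 0}"
  have finZ: "finite ?Z" and cardZ: "card ?Z = degree R" using good_roots[OF g[OF z0] p] by auto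
  have "\<forall>r\<in>?Z. \<exists>e0>0. \<forall>e. 0 < e \<and> e \<le> e0 \<longrightarrow> (\<exists>\<delta>>0. \<exists>\<rho>. \<rho> holomorphic_on ball z0 \<delta> \<and>
      (\<forall>t\<in>ball z0 \<delta>. \<rho> t \<in> ball r e \<and> ?F t (\<rho> t) = 0 \<and> (\<forall>s\<in>ball r e. ?F t s = 0 \<longrightarrow> s = \<rho> t)))"
  proof
    fix r assume r: "r \<in> ?Z"
    have nz: "poly (map_poly (hz z0) (pderiv R)) r \<noteq> 0" using g[OF z0] r by (auto simp: good_def)
    obtain e0 where "e0 > 0" "\<And>e. 0 < e \<Longrightarrow> e \<le> e0 \<Longrightarrow> \<exists>\<delta>>0. \<exists>\<rho>. \<rho> holomorphic_on ball z0 \<delta> \<and>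
      (\<forall>t\<in>ball z0 \<delta>. \<rho> t \<in> ball r e \<and> ?F t (\<rho> t) = 0 \<and> (\<forall>s\<in>ball r e. ?F t s = 0 \<longrightarrow> s = \<rho> t))"
      using IL_R[of z0 R r] r nz by auto
    then show "\<exists>e0>0. \<forall>e. 0 < e \<and> e \<le> e0 \<longrightarrow> (\<exists>\<delta>>0. \<exists>\<rho>. \<rho> holomorphic_on ball z0 \<delta> \<and>
      (\<forall>t\<in>ball z0 \<delta>. \<rho> t \<in> ball r e \<and> ?F t (\<rho> t) = 0 \<and> (\<forall>s\<in>ball r e. ?F t s = 0 \<longrightarrow> s = \<rho> t)))"
      by blast
  qed
  then obtain E0 where E0': "\<forall>r\<in>?Z. E0 r > 0 \<and> (\<forall>e. 0 < e \<and> e \<le> E0 r \<longrightarrow> (\<exists>\<delta>>0. \<exists>\<rho>. \<rho> holomorphic_on ball z0 \<delta> \<and>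
      (\<forall>t\<in>ball z0 \<delta>. \<rho> t \<in> ball r e \<and> ?F t (\<rho> t) = 0 \<and> (\<forall>s\<in>ball r e. ?F t s = 0 \<longrightarrow> s = \<rho> t))))"
    by (rule bchoice[THEN exE])
  have E0: "\<And>r. r \<in> ?Z \<Longrightarrow> E0 r > 0"
    "\<And>r e. r \<in> ?Z \<Longrightarrow> 0 < e \<Longrightarrow> e \<le> E0 r \<Longrightarrow> (\<exists>\<delta>>0. \<exists>\<rho>. \<rho> holomorphic_on ball z0 \<delta> \<and>
      (\<forall>t\<in>ball z0 \<delta>. \<rho> t \<in> ball r e \<and> ?F t (\<rho> t) = 0 \<and> (\<forall>s\<in>ball r e. ?F t s = 0 \<longrightarrow> s = \<rho> t)))"
    using E0' by blast+
  define A where "A = E0 ` ?Z \<union> (\<lambda>(r1,r2). dist r1 r2 / 2) ` {(r1,r2). r1 \<in> ?Z \<and> r2 \<in> ?Z \<and> r1 \<noteq> r2}"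
  have finA: "finite A" unfolding A_def
    by (intro finite_UnI finite_imageI finite_subset[OF _ finite_cartesian_product[OF finZ finZ]]) (use finZ in auto)
  have posA: "\<And>a. a \<in> A \<Longrightarrow> a > 0" unfolding A_def using E0(1) by auto
  obtain \<epsilon> where eps: "\<epsilon> > 0" "\<And>a. a \<in> A \<Longrightarrow> \<epsilon> \<le> a" using finite_pos_min[OF finA posA] by blast
  have epsE: "\<epsilon> \<le> E0 r" if "r \<in> ?Z" for r using eps(2)[of "E0 r"] that by (auto simp: A_def)
  have disj: "ball r1 \<epsilon> \<inter> ball r2 \<epsilon> = {}" if "r1 \<in> ?Z" "r2 \<in> ?Z" "r1 \<noteq> r2" for r1 r2
  proof -
    have "\<epsilon> \<le> dist r1 r2 / 2" using eps(2)[of "dist r1 r2 / 2"] that unfolding A_def by force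
    show ?thesis
    proof (rule ccontr)
      assume "ball r1 \<epsilon> \<inter> ball r2 \<epsilon> \<noteq> {}"
      then obtain y where "dist r1 y < \<epsilon>" "dist r2 y < \<epsilon>" by auto
      then have "dist r1 r2 < 2 * \<epsilon>" using dist_triangle[of r1 r2 y] by (simp add: dist_commute)
      then show False using \<open>\<epsilon> \<le> dist r1 r2 / 2\<close> by simp
    qed
  qed
  have "\<forall>r\<in>?Z. \<exists>d. d > 0 \<and> (\<exists>\<rho>. \<rho> holomorphic_on ball z0 d \<and>
      (\<forall>t\<in>ball z0 d. \<rho> t \<in> ball r \<epsilon> \<and> ?F t (\<rho> t) = 0 \<and> (\<forall>s\<in>ball r \<epsilon>. ?F t s = 0 \<longrightarrow> s = \<rho> t)))"
    using E0(2) epsE eps(1) by blast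
  then obtain Dl where Dl': "\<forall>r\<in>?Z. Dl r > 0 \<and> (\<exists>\<rho>. \<rho> holomorphic_on ball z0 (Dl r) \<and>
      (\<forall>t\<in>ball z0 (Dl r). \<rho> t \<in> ball r \<epsilon> \<and> ?F t (\<rho> t) = 0 \<and> (\<forall>s\<in>ball r \<epsilon>. ?F t s = 0 \<longrightarrow> s = \<rho> t)))"
    by (rule bchoice[THEN exE])
  then have Dl: "\<And>r. r \<in> ?Z \<Longrightarrow> Dl r > 0" by blast
  from Dl' have "\<forall>r\<in>?Z. \<exists>\<rho>. \<rho> holomorphic_on ball z0 (Dl r) \<and>
      (\<forall>t\<in>ball z0 (Dl r). \<rho> t \<in> ball r \<epsilon> \<and> ?F t (\<rho> t) = 0 \<and> (\<forall>s\<in>ball r \<epsilon>. ?F t s = 0 \<longrightarrow> s = \<rho> t))"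
    by blast
  then obtain Rt where Rt': "\<forall>r\<in>?Z. Rt r holomorphic_on ball z0 (Dl r) \<and>
      (\<forall>t\<in>ball z0 (Dl r). Rt r t \<in> ball r \<epsilon> \<and> ?F t (Rt r t) = 0 \<and> (\<forall>s\<in>ball r \<epsilon>. ?F t s = 0 \<longrightarrow> s = Rt r t))"
    by (rule bchoice[THEN exE])
  have Rt: "\<And>r. r \<in> ?Z \<Longrightarrow> Rt r holomorphic_on ball z0 (Dl r) \<and>
      (\<forall>t\<in>ball z0 (Dl r). Rt r t \<in> ball r \<epsilon> \<and> ?F t (Rt r t) = 0 \<and> (\<forall>s\<in>ball r \<epsilon>. ?F t s = 0 \<longrightarrow> s = Rt r t))"
    using Rt' by blast
  obtain \<delta>S where dS: "\<delta>S > 0" "ball z0 \<delta>S \<subseteq> S" using S z0 openE by blast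
  define \<delta> where "\<delta> = Min (insert \<delta>S (Dl ` ?Z))"
  have dpos: "\<delta> > 0" unfolding \<delta>_def using finZ dS Dl by (subst Min_gr_iff) auto
  have dle: "\<delta> \<le> \<delta>S" "\<And>r. r \<in> ?Z \<Longrightarrow> \<delta> \<le> Dl r" unfolding \<delta>_def using finZ by auto
  define T where "T = ball z0 \<delta>"
  have TS: "T \<subseteq> S" using dS dle by (auto simp: T_def)
  have RtT: "Rt r t \<in> ball r \<epsilon> \<and> ?F t (Rt r t) = 0 \<and> (\<forall>s\<in>ball r \<epsilon>. ?F t s = 0 \<longrightarrow> s = Rt r t)"
    if "r \<in> ?Z" "t \<in> T" for r t
    using Rt[OF that(1)] dle(2)[OF that(1)] that(2) by (auto simp: T_def)
  have RtC: "continuous_on T (Rt r)" if "r \<in> ?Z" for r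
    using Rt[OF that] dle(2)[OF that] holomorphic_on_imp_continuous_on holomorphic_on_subset
    by (metis T_def subset_ball)
  define v where "v = (\<lambda>r. ?C \<inter> (T \<times> ball r \<epsilon>)) ` ?Z"
  show "\<exists>T. z0 \<in> T \<and> openin (top_of_set S) T \<and>
          (\<exists>v. \<Union>v = ?C \<inter> fst -` T \<and> (\<forall>u \<in> v. openin (top_of_set ?C) u) \<and>
               pairwise disjnt v \<and> (\<forall>u \<in> v. \<exists>q. homeomorphism u T fst q))"
  proof (intro exI conjI)
    show "z0 \<in> T" using dpos by (simp add: T_def)
    show "openin (top_of_set S) T" using TS by (intro open_subset) (auto simp: T_def)
    show "\<Union>v = ?C \<inter> fst -` T"
    proof
      show "\<Union>v \<subseteq> ?C \<inter> fst -` T" by (auto simp: v_def)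
      show "?C \<inter> fst -` T \<subseteq> \<Union>v"
      proof
        fix x assume x: "x \<in> ?C \<inter> fst -` T"
        obtain t s where xts: "x = (t,s)" by (cases x)
        have t: "t \<in> T" and sr: "?F t s = 0" using x xts by auto
        let ?V = "(\<lambda>r. Rt r t) ` ?Z"
        have inj: "inj_on (\<lambda>r. Rt r t) ?Z"
        proof (rule inj_onI)
          fix r1 r2 assume r: "r1 \<in> ?Z" "r2 \<in> ?Z" "Rt r1 t = Rt r2 t"
          show "r1 = r2"
          proof (rule ccontr)
            assume "r1 \<noteq> r2"
            have "Rt r1 t \<in> ball r1 \<epsilon>" "Rt r1 t \<in> ball r2 \<epsilon>" using RtT[OF r(1) t] RtT[OF r(2) t] r(3) by simp_all
            then show False using disj[OF r(1,2) \<open>r1 \<noteq> r2\<close>] by (metis IntI empty_iff)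
          qed
        qed
        have Vsub: "?V \<subseteq> {s. ?F t s = 0}" using RtT t by auto
        have gt: "good R t" using g TS t by auto
        have "card ?V = degree R" using card_image[OF inj] cardZ by simp
        then have "?V = {s. ?F t s = 0}"
          using card_subset_eq[OF good_roots(1)[OF gt p] Vsub] good_roots(2)[OF gt p] by simp
        then obtain r where r: "r \<in> ?Z" "s = Rt r t" using sr by auto
        then have "x \<in> ?C \<inter> (T \<times> ball r \<epsilon>)" using x xts RtT[OF r(1) t] t by auto
        then show "x \<in> \<Union>v" using r(1) by (auto simp: v_def)
      qed
    qed
    show "\<forall>u\<in>v. openin (top_of_set ?C) u"
      unfolding v_def by (auto intro!: openin_open_Int open_Times simp: T_def)
    show "pairwise disjnt v"
    proof (rule pairwiseI)
      fix u1 u2 assume u12: "u1 \<in> v" "u2 \<in> v" "u1 \<noteq> u2"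
      obtain r1 where r1: "r1 \<in> ?Z" "u1 = ?C \<inter> (T \<times> ball r1 \<epsilon>)" using u12(1) unfolding v_def by (rule imageE)
      obtain r2 where r2: "r2 \<in> ?Z" "u2 = ?C \<inter> (T \<times> ball r2 \<epsilon>)" using u12(2) unfolding v_def by (rule imageE)
      have "r1 \<noteq> r2" using u12(3) r1 r2 by blast
      then have "ball r1 \<epsilon> \<inter> ball r2 \<epsilon> = {}" using disj r1(1) r2(1) by blast
      then show "disjnt u1 u2" unfolding disjnt_def r1(2) r2(2) by blast
    qed
    show "\<forall>u\<in>v. \<exists>q. homeomorphism u T fst q"
    proof
      fix u assume "u \<in> v"
      then obtain r where r: "r \<in> ?Z" and u: "u = ?C \<inter> (T \<times> ball r \<epsilon>)" by (auto simp: v_def)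
      have inu: "(t, Rt r t) \<in> u" if "t \<in> T" for t using RtT[OF r that] that TS u by auto
      have bk: "x = (fst x, Rt r (fst x))" if "x \<in> u" for x
        using that RtT[OF r, of "fst x"] u by (cases x) auto
      show "\<exists>q. homeomorphism u T fst q"
      proof (intro exI homeomorphismI)
        show "continuous_on u fst" by (intro continuous_intros)
        show "continuous_on T (\<lambda>t. (t, Rt r t))" by (intro continuous_intros RtC r)
        show "fst ` u \<subseteq> T" using u by auto
        show "(\<lambda>t. (t, Rt r t)) ` T \<subseteq> u" using inu by auto
        show "\<And>x. x \<in> u \<Longrightarrow> (fst x, Rt r (fst x)) = x" using bk by auto
        show "\<And>y. y \<in> T \<Longrightarrow> fst (y, Rt r y) = y" by simp
      qed
    qed
  qed
qed


theorem lemma17: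
  fixes F :: "real poly poly poly poly"    \<comment> \<open>F with variable order y, x, t, s\<close>
    and Fs :: "real poly poly poly poly"   \<comment> \<open>the same F with variable order s, y, x, t\<close>
    and M :: "real poly poly poly"         \<comment> \<open>variable order x, t, s\<close>
    and Rts :: "real poly poly"            \<comment> \<open>R with variable order t, s\<close>
    and R :: "real poly poly"              \<comment> \<open>the same R with variable order s, t\<close>
    and Gt :: "real poly poly poly"        \<comment> \<open>tilde G, variable order y, x, t\<close>
    and G :: "real poly poly poly"         \<comment> \<open>variable order y, x, t\<close>
    and c :: "real poly"
    and C I :: "real set"
  assumes F_sqfree: "squarefree F"
    and F_no_ts_factor: "\<forall>h :: real poly poly. [:[:h:]:] dvd F \<longrightarrow> is_unit h"
    and F_lc: "degree (lead_coeff F) = 0"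
    and Fs_F: "\<forall>x y t s. ev4 Fs s y x t = ev4 F y x t s"
    and M_def: "is_sqfree_part M (disc F)"
    and Rts_def: "is_sqfree_part Rts (disc M)"
    and R_Rts: "\<forall>t s. ev2 R s t = ev2 Rts t s"
    and R_nonzero: "R \<noteq> 0"
    and R_dep_s: "degree R > 0"
    and R_dep_t: "\<exists>i. degree (coeff R i) > 0"
    and Gt_def: "is_sqfree_part Gt
                   (resultant Fs (map_poly (\<lambda>a. [:[:a:]:]) R))"
    and G_def: "Gt = [:[:c:]:] * G"
    and G_no_t_factor: "\<forall>h :: real poly. [:[:h:]:] dvd G \<longrightarrow> is_unit h"
    and G_lc: "degree (lead_coeff G) = 0"
    and C_crit: "critical_set G C"
    and I_open: "open I" and I_interval: "is_interval I"
    and I_disj: "I \<inter> ({t. poly (disc R) t = 0} \<union> C) = {}"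
  shows "\<exists>(\<psi> :: nat \<Rightarrow> complex \<Rightarrow> complex) U.
           open U \<and> complex_of_real ` I \<subseteq> U \<and>
           (\<forall>k \<in> {1..degree R}. \<psi> k analytic_on U) \<and>
           (\<forall>j \<in> {1..degree R}. \<forall>k \<in> {1..degree R}. j \<noteq> k \<longrightarrow> (\<exists>z \<in> U. \<psi> j z \<noteq> \<psi> k z)) \<and>
           {(t, s). t \<in> I \<and> ev2 (map_poly (map_poly complex_of_real) R) s (complex_of_real t) = 0}
             = {(t, \<psi> k (complex_of_real t)) | t k. t \<in> I \<and> k \<in> {1..degree R}}"
proof (cases "I = {}")
  case True
  show ?thesis
    by (rule exI[of _ "\<lambda>k z. of_nat k"], rule exI[of _ UNIV]) (use True in auto)
next
  case False
  then obtain t0 where t0: "t0 \<in> I" by blast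
  let ?p = "degree R"
  let ?F = "\<lambda>t s. poly (map_poly (hz t) R) s"
  define D where "D = map_poly (of_real :: real \<Rightarrow> complex) (disc R)"
  have hzD: "hz z (resultant R (pderiv R)) = poly D z" for z by (simp add: hz_def D_def disc_def)
  have Dreal: "poly D (of_real x) = of_real (poly (disc R) x)" for x
    by (simp add: D_def of_real_hom.poly_map_poly)
  have Dnz: "poly D (of_real x) \<noteq> 0" if "x \<in> I" for x
    using I_disj that by (auto simp: Dreal)
  have D0: "D \<noteq> 0" using Dnz[OF t0] by auto
  define Z where "Z = {z. poly D z = 0}"
  have finZ: "finite Z" unfolding Z_def using D0 by (rule poly_roots_finite)
  obtain \<eta> where eta: "\<eta> > 0" "\<And>a. a \<in> (\<lambda>w. \<bar>Im w\<bar>) ` {w\<in>Z. Im w \<noteq> 0} \<Longrightarrow> \<eta> \<le> a"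
    by (rule finite_pos_min[of "(\<lambda>w. \<bar>Im w\<bar>) ` {w\<in>Z. Im w \<noteq> 0}"]) (use finZ in auto)
  define U where "U = {z. Re z \<in> I \<and> \<bar>Im z\<bar> < \<eta>}"
  have Ueq: "U = Re -` I \<inter> Im -` {-\<eta><..<\<eta>}" by (auto simp: U_def abs_less_iff)
  have openU: "open U" unfolding Ueq
    by (intro open_Int open_vimage I_open) (auto intro!: continuous_intros)
  have convI: "convex I" using I_interval by (simp add: is_interval_convex)
  have convU: "convex U"
    unfolding convex_alt
  proof (intro ballI allI impI)
    fix x y and u :: real assume x: "x \<in> U" and y: "y \<in> U" and u: "0 \<le> u \<and> u \<le> 1"
    have "(1 - u) * Re x + u * Re y \<in> I"
      using convexD_alt[OF convI, of "Re x" "Re y" u] x y u by (auto simp: U_def)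
    moreover have "\<bar>(1 - u) * Im x + u * Im y\<bar> < \<eta>"
    proof -
      have ax: "\<bar>Im x\<bar> < \<eta>" and ay: "\<bar>Im y\<bar> < \<eta>" using x y by (simp_all add: U_def)
      have u0: "0 \<le> u" "0 \<le> 1 - u" using u by simp_all
      have "\<bar>(1 - u) * Im x + u * Im y\<bar> \<le> \<bar>(1 - u) * Im x\<bar> + \<bar>u * Im y\<bar>" by (rule abs_triangle_ineq)
      also have "\<dots> = (1 - u) * \<bar>Im x\<bar> + u * \<bar>Im y\<bar>" using u0 by (simp add: abs_mult)
      also have "\<dots> \<le> (1 - u) * max \<bar>Im x\<bar> \<bar>Im y\<bar> + u * max \<bar>Im x\<bar> \<bar>Im y\<bar>"
        by (intro add_mono mult_left_mono u0) simp_all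
      also have "\<dots> = max \<bar>Im x\<bar> \<bar>Im y\<bar>" by (simp add: algebra_simps)
      also have "\<dots> < \<eta>" using ax ay by simp
      finally show ?thesis .
    qed
    ultimately show "(1 - u) *\<^sub>R x + u *\<^sub>R y \<in> U" by (simp add: U_def)
  qed
  have IU: "complex_of_real ` I \<subseteq> U" using eta by (auto simp: U_def)
  have goodU: "good R z" if z: "z \<in> U" for z
  proof (rule good_I[OF R_dep_s])
    show "hz z (resultant R (pderiv R)) \<noteq> 0" unfolding hzD
    proof
      assume pz: "poly D z = 0"
      show False
      proof (cases "Im z = 0")
        case True
        then have "z = of_real (Re z)" by (simp add: complex_eq_iff)
        then show False using pz Dnz[of "Re z"] z by (auto simp: U_def)
      next
        case False
        then have "\<eta> \<le> \<bar>Im z\<bar>" using eta(2)[of "\<bar>Im z\<bar>"] pz by (auto simp: Z_def)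
        then show False using z by (simp add: U_def)
      qed
    qed
  qed
  define Cv where "Cv = {x. fst x \<in> U \<and> ?F (fst x) (snd x) = 0}"
  have cov: "covering_space Cv fst U" unfolding Cv_def by (rule cover[OF R_dep_s openU goodU])
  define z0 where "z0 = complex_of_real t0"
  have z0U: "z0 \<in> U" using IU t0 by (auto simp: z0_def)
  let ?Z0 = "{s. ?F z0 s = 0}"
  have finZ0: "finite ?Z0" and cardZ0: "card ?Z0 = ?p" using good_roots[OF goodU[OF z0U] R_dep_s] by auto
  obtain \<rho> where bij: "bij_betw \<rho> {1..?p} ?Z0" using ex_bij_betw_nat_finite_1[OF finZ0] cardZ0 by auto
  have scU: "simply_connected U" by (rule convex_imp_simply_connected[OF convU])
  have lpcU: "locally path_connected U" by (rule open_imp_locally_path_connected[OF openU])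
  have "\<forall>k\<in>{1..?p}. \<exists>g. continuous_on U g \<and> g \<in> U \<rightarrow> Cv \<and> g z0 = (z0, \<rho> k) \<and> (\<forall>y\<in>U. fst (g y) = y)"
  proof
    fix k assume k: "k \<in> {1..?p}"
    have a: "(z0, \<rho> k) \<in> Cv" using bij_betwE[OF bij] k z0U by (auto simp: Cv_def)
    obtain g where "continuous_on U g" "g \<in> U \<rightarrow> Cv" "g z0 = (z0, \<rho> k)" "\<And>y. y \<in> U \<Longrightarrow> fst (g y) = id y"
      by (rule covering_space_lift_strong[OF cov a z0U scU lpcU continuous_on_id]) auto
    then show "\<exists>g. continuous_on U g \<and> g \<in> U \<rightarrow> Cv \<and> g z0 = (z0, \<rho> k) \<and> (\<forall>y\<in>U. fst (g y) = y)" by auto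
  qed
  then obtain Gf where Gf': "\<forall>k\<in>{1..?p}. continuous_on U (Gf k) \<and> Gf k \<in> U \<rightarrow> Cv \<and> Gf k z0 = (z0, \<rho> k) \<and> (\<forall>y\<in>U. fst (Gf k y) = y)"
    by (rule bchoice[THEN exE])
  have Gcont: "continuous_on U (Gf k)" and Gin: "Gf k \<in> U \<rightarrow> Cv" and G0: "Gf k z0 = (z0, \<rho> k)"
    and Gfst: "\<And>y. y \<in> U \<Longrightarrow> fst (Gf k y) = y" if "k \<in> {1..?p}" for k
    using Gf' that by blast+
  define \<psi> where "\<psi> k z = snd (Gf k z)" for k z
  have \<psi>root: "?F y (\<psi> k y) = 0" if "k \<in> {1..?p}" "y \<in> U" for k y
  proof -
    have "Gf k y \<in> Cv" using Gin[OF that(1)] that(2) by auto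
    then show ?thesis using Gfst[OF that] by (auto simp: Cv_def \<psi>_def)
  qed
  have \<psi>hol: "\<psi> k holomorphic_on U" if k: "k \<in> {1..?p}" for k
  proof (rule root_hol[OF openU _ _ goodU])
    show "continuous_on U (\<psi> k)" unfolding \<psi>_def by (intro continuous_intros Gcont k)
    show "\<And>y. y \<in> U \<Longrightarrow> ?F y (\<psi> k y) = 0" using \<psi>root[OF k] by blast
  qed
  have \<psi>0: "\<psi> k z0 = \<rho> k" if "k \<in> {1..?p}" for k using G0[OF that] by (simp add: \<psi>_def)
  have inj\<rho>: "inj_on \<rho> {1..?p}" using bij by (simp add: bij_betw_def)
  have \<psi>inj: "j = k" if jk: "j \<in> {1..?p}" "k \<in> {1..?p}" and y: "y \<in> U" and eq: "\<psi> j y = \<psi> k y" for j k y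
  proof -
    have "Gf j y = Gf k y" using eq Gfst[OF jk(1) y] Gfst[OF jk(2) y] by (simp add: \<psi>_def prod_eq_iff)
    then have "Gf j z0 = Gf k z0"
      by (rule covering_space_lift_unique[OF cov _ continuous_on_id _ Gcont[OF jk(1)] Gin[OF jk(1)] _
            Gcont[OF jk(2)] Gin[OF jk(2)] _ convex_connected[OF convU] y z0U])
         (use Gfst[OF jk(1)] Gfst[OF jk(2)] in auto)
    then have "\<rho> j = \<rho> k" using G0[OF jk(1)] G0[OF jk(2)] by simp
    then show "j = k" using inj\<rho> jk by (meson inj_onD)
  qed
  show ?thesis
  proof (intro exI conjI ballI impI)
    show "open U" by (rule openU)
    show "complex_of_real ` I \<subseteq> U" by (rule IU)
    fix k assume k: "k \<in> {1..?p}"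
    show "\<psi> k analytic_on U" using \<psi>hol[OF k] openU by (simp add: analytic_on_open)
  next
    fix j k assume jk: "j \<in> {1..?p}" "k \<in> {1..?p}" "j \<noteq> k"
    show "\<exists>z\<in>U. \<psi> j z \<noteq> \<psi> k z"
      using z0U \<psi>inj[OF jk(1,2) z0U] jk(3) by blast
  next
    show "{(t, s). t \<in> I \<and> ev2 (map_poly (map_poly complex_of_real) R) s (complex_of_real t) = 0}
             = {(t, \<psi> k (complex_of_real t)) | t k. t \<in> I \<and> k \<in> {1..?p}}"
    proof (intro equalityI subsetI)
      fix x assume "x \<in> {(t, s). t \<in> I \<and> ev2 (map_poly (map_poly complex_of_real) R) s (complex_of_real t) = 0}"
      then obtain t s where x: "x = (t, s)" "t \<in> I" "?F (of_real t) s = 0" by (auto simp: ev2_hz)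
      define y where "y = complex_of_real t"
      have yU: "y \<in> U" using IU x(2) by (auto simp: y_def)
      let ?V = "(\<lambda>k. \<psi> k y) ` {1..?p}"
      have inj: "inj_on (\<lambda>k. \<psi> k y) {1..?p}" by (rule inj_onI) (use \<psi>inj yU in blast)
      have Vsub: "?V \<subseteq> {s. ?F y s = 0}" using \<psi>root yU by auto
      have "card ?V = ?p" using card_image[OF inj] by simp
      then have "?V = {s. ?F y s = 0}"
        using card_subset_eq[OF good_roots(1)[OF goodU[OF yU] R_dep_s] Vsub] good_roots(2)[OF goodU[OF yU] R_dep_s] by simp
      then have "s \<in> ?V" using x(3) by (simp add: y_def)
      then obtain k where "s = \<psi> k y" "k \<in> {1..?p}" by (rule imageE)
      then show "x \<in> {(t, \<psi> k (complex_of_real t)) | t k. t \<in> I \<and> k \<in> {1..?p}}"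
        using x(1,2) by (auto simp: y_def)
    next
      fix x assume "x \<in> {(t, \<psi> k (complex_of_real t)) | t k. t \<in> I \<and> k \<in> {1..?p}}"
      then obtain t k where x: "x = (t, \<psi> k (complex_of_real t))" "t \<in> I" "k \<in> {1..?p}" by auto
      have "?F (of_real t) (\<psi> k (of_real t)) = 0" using \<psi>root[OF x(3)] IU x(2) by auto
      then show "x \<in> {(t, s). t \<in> I \<and> ev2 (map_poly (map_poly complex_of_real) R) s (complex_of_real t) = 0}"
        using x by (simp add: ev2_hz)
    qed
  qed
qed


end
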